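(* Let $x, y, p \in \mathbb{Z}$ with $p \geq 3$ a prime such that $x^2 - 2 = y^p$. Then there exist $a, b, r \in \mathbb{Z}$ with $|r| \leq \frac{p-1}{2}$ such that $$x + \sqrt{2} = (1+\sqrt{2})^r (a + b\sqrt{2})^p.$$ Hence the integers $a, b$ satisfy $$\frac{1}{2\sqrt{2}}\left((1+\sqrt{2})^r (a+b\sqrt{2})^p - (1-\sqrt{2})^r (a - b\sqrt{2})^p\right) = 1.$$ *)

theory Defs
  imports Complex_Main "HOL-Computational_Algebra.Primes"
begin

end

theory Submission
  imports Defs
begin



datatype zs = ZS (re: int) (im: int)

instantiation zs :: comm_ring_1
begin
definition "0 = ZS 0 0"
definition "1 = ZS 1 0"
definition "a + b = ZS (re a + re b) (im a + im b)"
definition "- a = ZS (- re a) (- im a)"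
definition "a - b = ZS (re a - re b) (im a - im b)"
definition "a * b = ZS (re a * re b + 2 * im a * im b) (re a * im b + im a * re b)"
instance
  by standard (auto simp: zero_zs_def one_zs_def plus_zs_def uminus_zs_def minus_zs_def
      times_zs_def zs.expand algebra_simps)
end

lemma zs_simps [simp]:
  "ZS a b + ZS c d = ZS (a+c) (b+d)" "ZS a b - ZS c d = ZS (a-c) (b-d)"
  "- ZS a b = ZS (-a) (-b)" "ZS a b * ZS c d = ZS (a*c + 2*b*d) (a*d+b*c)"
  by (simp_all add: plus_zs_def minus_zs_def uminus_zs_def times_zs_def)

lemma zs_0: "(0::zs) = ZS 0 0" and zs_1: "(1::zs) = ZS 1 0"
  by (simp_all add: zero_zs_def one_zs_def)

definition N :: "zs \<Rightarrow> int" where "N z = re z ^ 2 - 2 * im z ^ 2"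
definition cnj :: "zs \<Rightarrow> zs" where "cnj z = ZS (re z) (- im z)"

lemma N_mult: "N (a * b) = N a * N b"
  by (cases a; cases b) (simp add: N_def algebra_simps power2_eq_square)

lemma N_one [simp]: "N 1 = 1" by (simp add: N_def zs_1)

lemma mult_cnj: "z * cnj z = ZS (N z) 0"
  by (cases z) (simp add: N_def cnj_def power2_eq_square)

lemma cnj_mult: "cnj (a * b) = cnj a * cnj b"
  by (cases a; cases b) (simp add: cnj_def)
lemma cnj_add: "cnj (a + b) = cnj a + cnj b"
  by (cases a; cases b) (simp add: cnj_def)
lemma cnj_one [simp]: "cnj 1 = 1" by (simp add: cnj_def zs_1)
lemma cnj_neg: "cnj (- a) = - cnj a" by (cases a) (simp add: cnj_def)
lemma cnj_pow: "cnj (a ^ n) = cnj a ^ n"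
  by (induction n) (simp_all add: cnj_mult)
lemma N_cnj: "N (cnj a) = N a" by (simp add: N_def cnj_def)

lemma sq2_descent: "\<forall>a b :: int. nat \<bar>b\<bar> = n \<longrightarrow> a^2 = 2*b^2 \<longrightarrow> b = 0"
proof (induction n rule: less_induct)
  case (less n)
  show ?case
  proof (intro allI impI)
    fix a b :: int assume h: "nat \<bar>b\<bar> = n" "a^2 = 2*b^2"
    have "even (a^2)" using h(2) by simp
    then obtain c where c: "a = 2*c" by auto
    have "b^2 = 2*c^2" using h(2) c by (simp add: power2_eq_square)
    then have "even (b^2)" by simp
    then obtain d where d: "b = 2*d" by auto
    have "c^2 = 2*d^2" using \<open>b^2 = 2*c^2\<close> d by (simp add: power2_eq_square)
    show "b = 0"
    proof (rule ccontr)
      assume "b \<noteq> 0"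
      then have "nat \<bar>d\<bar> < n" using h(1) d by auto
      then have "d = 0" using less \<open>c^2 = 2*d^2\<close> by blast
      then show False using d \<open>b \<noteq> 0\<close> by simp
    qed
  qed
qed

lemma N_zero_iff: "N z = 0 \<longleftrightarrow> z = 0"
proof
  assume "N z = 0"
  then have h: "re z ^ 2 = 2 * im z ^ 2" by (simp add: N_def)
  then have "im z = 0" using sq2_descent by blast
  then have "re z = 0" using h by simp
  then show "z = 0" using \<open>im z = 0\<close> by (cases z) (simp add: zs_0)
qed (simp add: N_def zs_0)

instance zs :: idom
proof
  fix a b :: zs assume "a \<noteq> 0" "b \<noteq> 0"
  then show "a * b \<noteq> 0" using N_zero_iff N_mult by (metis mult_eq_0_iff)
qed


lemma unit_iff: "z dvd 1 \<longleftrightarrow> \<bar>N z\<bar> = 1"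
proof
  assume "z dvd 1"
  then obtain w where "1 = z * w" by (auto elim: dvdE)
  then have "N z * N w = 1" by (metis N_one N_mult)
  then show "\<bar>N z\<bar> = 1" by (metis abs_one abs_zmult_eq_1)
next
  assume h: "\<bar>N z\<bar> = 1"
  have "z * (cnj z * ZS (N z) 0) = ZS (N z * N z) 0"
    by (simp add: mult.assoc[symmetric] mult_cnj)
  also have "N z * N z = 1" using h by (metis abs_mult_self_eq mult.right_neutral)
  finally show "z dvd 1" by (metis dvd_triv_left one_zs_def)
qed

lemma round_ex: "(n::int) \<noteq> 0 \<Longrightarrow> \<exists>q. 2 * \<bar>u - q * n\<bar> \<le> \<bar>n\<bar>"
proof -
  assume n: "n \<noteq> 0"
  define m where "m = \<bar>n\<bar>"
  have m: "m > 0" using n m_def by simp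
  define q where "q = (2*u + m) div (2*m)"
  have e: "(2*u+m) - 2*m*q = (2*u+m) mod (2*m)" unfolding q_def
    using minus_div_mult_eq_mod[of "2*u+m" "2*m"] by (simp add: mult.commute)
  have "0 \<le> (2*u+m) - 2*m*q" "(2*u+m) - 2*m*q < 2*m"
    unfolding e using m by simp_all
  then have "2 * \<bar>u - q * m\<bar> \<le> m" by (simp add: algebra_simps abs_if)
  moreover have "q * m = (q * sgn n) * n" using m_def n by (simp add: abs_sgn mult.assoc)
  ultimately show ?thesis using m_def by metis
qed

lemma euclid: assumes "b \<noteq> 0" shows "\<exists>q. \<bar>N (a - q * b)\<bar> < \<bar>N b\<bar>"
proof -
  define n where "n = N b"
  have n: "n \<noteq> 0" using assms N_zero_iff n_def by simp
  obtain u v where uv: "a * cnj b = ZS u v" by (cases "a * cnj b") auto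
  obtain q1 where q1: "2 * \<bar>u - q1 * n\<bar> \<le> \<bar>n\<bar>" using round_ex n by blast
  obtain q2 where q2: "2 * \<bar>v - q2 * n\<bar> \<le> \<bar>n\<bar>" using round_ex n by blast
  define q where "q = ZS q1 q2"
  define E where "E = u - q1 * n"
  define F where "F = v - q2 * n"
  have "(a - q * b) * cnj b = a * cnj b - q * (b * cnj b)" by (simp add: algebra_simps)
  also have "\<dots> = ZS E F" using uv by (simp add: mult_cnj q_def E_def F_def n_def algebra_simps)
  finally have eq: "(a - q * b) * cnj b = ZS E F" .
  have "N (a - q*b) * n = E^2 - 2*F^2"
    using N_mult[of "a-q*b" "cnj b"] N_cnj[of b] eq by (simp add: N_def n_def)
  moreover have "\<bar>E^2 - 2*F^2\<bar> < n^2"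
  proof -
    have "(2*\<bar>E\<bar>)^2 \<le> \<bar>n\<bar>^2" by (rule power_mono) (use q1 E_def in auto)
    then have "4 * E^2 \<le> n^2" by (simp add: power_mult_distrib)
    moreover have "(2*\<bar>F\<bar>)^2 \<le> \<bar>n\<bar>^2" by (rule power_mono) (use q2 F_def in auto)
    then have "4 * F^2 \<le> n^2" by (simp add: power_mult_distrib)
    moreover have "n^2 > 0" using n by simp
    moreover have "E^2 \<ge> 0" "F^2 \<ge> 0" by simp_all
    ultimately show ?thesis unfolding abs_less_iff by linarith
  qed
  ultimately have "\<bar>N (a - q*b)\<bar> * \<bar>n\<bar> < \<bar>n\<bar> * \<bar>n\<bar>"
    by (simp add: abs_mult power2_eq_square)
  then have "\<bar>N (a - q*b)\<bar> < \<bar>n\<bar>" using n by (metis mult_less_cancel_right_pos zero_less_abs_iff)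
  then show ?thesis using n_def by blast
qed





lemma bezout:
  fixes a b :: zs
  assumes "a \<noteq> 0 \<or> b \<noteq> 0"
  shows "\<exists>s t. s*a + t*b \<noteq> 0 \<and> (s*a+t*b) dvd a \<and> (s*a+t*b) dvd b"
proof -
  define P where "P d \<longleftrightarrow> (\<exists>s t. d = s*a+t*b) \<and> d \<noteq> (0::zs)" for d
  have "a = 1*a + 0*b" "b = 0*a + 1*b" by simp_all
  then have "P a \<or> P b" using assms unfolding P_def by blast
  then obtain d1 where "P d1" by blast
  from ex_has_least_nat[of P d1 "\<lambda>d. nat \<bar>N d\<bar>", OF this]
  obtain d where d: "P d" and dmin': "\<forall>e. P e \<longrightarrow> nat \<bar>N d\<bar> \<le> nat \<bar>N e\<bar>"
    by blast
  have dmin: "nat \<bar>N d\<bar> \<le> nat \<bar>N e\<bar>" if "P e" for e using dmin' that by blast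
  obtain s t where st: "d = s*a+t*b" and d0: "d \<noteq> 0" using d P_def by blast
  have gen: "d dvd c" if c: "c = s'*a + t'*b" for c s' t'
  proof -
    obtain q where q: "\<bar>N (c - q*d)\<bar> < \<bar>N d\<bar>" using euclid d0 by blast
    have cq: "c - q*d = (s' - q*s)*a + (t' - q*t)*b" using c st by (simp add: algebra_simps)
    then have "c - q*d = 0"
    proof (rule contrapos_pp)
      assume "c - q*d \<noteq> 0"
      then have "P (c - q*d)" unfolding P_def using cq by blast
      then have "nat \<bar>N d\<bar> \<le> nat \<bar>N (c - q*d)\<bar>" by (rule dmin)
      then show "\<not> (c - q*d = (s' - q*s)*a + (t' - q*t)*b)" using q by simp
    qed
    then have "c = q * d" by simp
    then show ?thesis by simp
  qed
  have "d dvd a" by (rule gen[of a 1 0]) simp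
  moreover have "d dvd b" by (rule gen[of b 0 1]) simp
  ultimately show ?thesis using st d0 by blast
qed

definition primeish :: "zs \<Rightarrow> bool" where
  "primeish p \<longleftrightarrow> (\<forall>a. p dvd a \<or> (\<exists>s t. s*p + t*a = 1))"

lemma N_dvd: "a dvd b \<Longrightarrow> N a dvd N b"
  by (metis N_mult dvd_def)

lemma minimal_primeish:
  assumes p0: "p \<noteq> 0" and pu: "\<not> p dvd 1" and pg: "p dvd g"
    and pmin: "\<And>d. d dvd g \<Longrightarrow> \<not> d dvd 1 \<Longrightarrow> nat \<bar>N p\<bar> \<le> nat \<bar>N d\<bar>"
  shows "primeish p"
  unfolding primeish_def
proof
  fix a
  obtain s t where d0: "s*p+t*a \<noteq> 0" and dp: "(s*p+t*a) dvd p" and da: "(s*p+t*a) dvd a"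
    using bezout[of p a] p0 by blast
  define d where "d = s*p+t*a"
  show "p dvd a \<or> (\<exists>s t. s * p + t * a = 1)"
  proof (cases "d dvd 1")
    case True
    then obtain e where "1 = d * e" by (auto elim: dvdE)
    then have "(e*s)*p + (e*t)*a = 1" unfolding d_def by (simp add: algebra_simps)
    then show ?thesis by blast
  next
    case False
    have "d dvd g" using dp pg d_def dvd_trans by blast
    then have le: "\<bar>N p\<bar> \<le> \<bar>N d\<bar>" using pmin[of d] False by simp
    obtain e where pe: "p = d * e" using dp d_def by (auto elim: dvdE)
    have "e \<noteq> 0" using pe p0 by auto
    then have "N e \<noteq> 0" by (simp add: N_zero_iff)
    have "N d \<noteq> 0" using d0 unfolding d_def by (simp add: N_zero_iff)
    have "\<bar>N p\<bar> = \<bar>N d\<bar> * \<bar>N e\<bar>" using pe by (simp add: N_mult abs_mult)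
    then have "\<bar>N d\<bar> * \<bar>N e\<bar> \<le> \<bar>N d\<bar> * 1" using le by simp
    then have "\<bar>N e\<bar> \<le> 1" using \<open>N d \<noteq> 0\<close>
      by (simp add: mult_le_cancel_left_pos)
    then have "\<bar>N e\<bar> = 1" using \<open>N e \<noteq> 0\<close> by linarith
    then have "e dvd 1" using unit_iff by simp
    then obtain e' where "1 = e * e'" by (auto elim: dvdE)
    then have "d = d * (e * e')" by simp
    then have "d = p * e'" using pe by (simp add: mult.assoc)
    then have "p dvd d" by simp
    then show ?thesis using da d_def dvd_trans by blast
  qed
qed

lemma primeish_mult:
  assumes "primeish p" "p dvd a * b" shows "p dvd a \<or> p dvd b"
proof (cases "p dvd a")
  case False
  then obtain s t where "s*p + t*a = 1" using assms(1) primeish_def by blast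
  then have "b = (s*p + t*a)*b" by simp
  then have "b = s*p*b + t*(a*b)" by (simp add: algebra_simps)
  moreover have "p dvd s*p*b + t*(a*b)" using assms(2) by simp
  ultimately show ?thesis by simp
qed simp

lemma primeish_pow:
  assumes "primeish p" "p \<noteq> 0" "\<not> p dvd a"
  shows "p^k dvd a * b \<Longrightarrow> p^k dvd b"
proof (induction k arbitrary: b)
  case 0 then show ?case by simp
next
  case (Suc k)
  have "p dvd p^Suc k" by simp
  then have "p dvd a * b" using Suc.prems dvd_trans by blast
  then have "p dvd b" using primeish_mult assms by blast
  then obtain b' where b': "b = p * b'" by (auto elim: dvdE)
  have "p * p^k dvd p * (a * b')" using Suc.prems b' by (simp add: algebra_simps)
  then have "p^k dvd a * b'" using assms(2) by simp
  then have "p^k dvd b'" using Suc.IH by blast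
  then show ?case using b' by simp
qed




lemma power_lemma:
  fixes p :: nat assumes p: "p > 0"
  shows "\<forall>a b g :: zs. nat \<bar>N g\<bar> = n \<longrightarrow> a * b = g ^ p \<longrightarrow> (\<exists>s t. s*a + t*b = 1)
           \<longrightarrow> (\<exists>u d. u dvd 1 \<and> a = u * d ^ p)"
proof (induction n rule: less_induct)
  case (less n)
  show ?case
  proof (intro allI impI)
    fix a b g :: zs
    assume gn: "nat \<bar>N g\<bar> = n" and abg: "a * b = g ^ p" and cop: "\<exists>s t. s*a + t*b = 1"
    obtain s t where st: "s*a + t*b = 1" using cop by blast
    show "\<exists>u d. u dvd 1 \<and> a = u * d ^ p"
    proof (cases "g = 0")
      case True
      then have "a * b = 0" using abg p by simp
      then have "a = 0 \<or> b = 0" by simp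
      then show ?thesis
      proof
        assume "a = 0" then show ?thesis using p by (intro exI[of _ 1] exI[of _ 0]) simp
      next
        assume "b = 0" then have "s * a = 1" using st by simp
        then have "a dvd 1" by (metis dvd_triv_right)
        then show ?thesis by (intro exI[of _ a] exI[of _ 1]) simp
      qed
    next
      case g0: False
      show ?thesis
      proof (cases "g dvd 1")
        case True
        then obtain h where "1 = g * h" by (auto elim: dvdE)
        then have "1 = g^p * h^p" by (metis power_mult_distrib power_one)
        then have "g ^ p dvd 1" by (metis dvd_triv_left)
        then have "a * b dvd 1" using abg by simp
        then have "a dvd 1" using dvd_mult_left by blast
        then show ?thesis by (intro exI[of _ a] exI[of _ 1]) simp
      next
        case gu: False
        define Q where "Q d \<longleftrightarrow> d dvd g \<and> \<not> d dvd 1" for d :: zs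
        have "Q g" using gu Q_def by simp
        from ex_has_least_nat[of Q g "\<lambda>d. nat \<bar>N d\<bar>", OF this]
        obtain q where q: "Q q" and qmin': "\<forall>e. Q e \<longrightarrow> nat \<bar>N q\<bar> \<le> nat \<bar>N e\<bar>"
          by blast
        have qg: "q dvd g" and qu: "\<not> q dvd 1" using q Q_def by auto
        have q0: "q \<noteq> 0" using qg g0 by auto
        have pq: "primeish q"
          by (rule minimal_primeish[OF q0 qu qg]) (use qmin' Q_def in blast)
        obtain g' where g': "g = q * g'" using qg by (auto elim: dvdE)
        have "g' \<noteq> 0" using g0 g' by auto
        have "\<bar>N q\<bar> \<noteq> 1" using qu unit_iff by simp
        moreover have "N q \<noteq> 0" using q0 by (simp add: N_zero_iff)
        ultimately have "\<bar>N q\<bar> \<ge> 2" by linarith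
        moreover have "N g' \<noteq> 0" using \<open>g' \<noteq> 0\<close> by (simp add: N_zero_iff)
        moreover have "\<bar>N g\<bar> = \<bar>N q\<bar> * \<bar>N g'\<bar>" using g' by (simp add: N_mult abs_mult)
        ultimately have "\<bar>N g'\<bar> < \<bar>N g\<bar>"
          by (simp add: mult_less_cancel_right1)
        then have lt: "nat \<bar>N g'\<bar> < n" using gn by simp
        have qgp: "q ^ p dvd a * b" using abg g' by (simp add: power_mult_distrib)
        have "q dvd q ^ p" using p by (simp add: dvd_power)
        then have "q dvd a * b" using qgp dvd_trans by blast
        then have qab: "q dvd a \<or> q dvd b" using primeish_mult pq by blast
        have not_both: "\<not> (q dvd a \<and> q dvd b)"
        proof
          assume "q dvd a \<and> q dvd b"
          then have "q dvd s*a + t*b" by simp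
          then show False using st qu by simp
        qed
        have qp0: "q ^ p \<noteq> 0" using q0 by simp
        from qab show ?thesis
        proof
          assume qa: "q dvd a"
          then have "\<not> q dvd b" using not_both by blast
          have "q ^ p dvd b * a" using qgp by (simp add: mult.commute)
          then have "q ^ p dvd a" using primeish_pow[OF pq q0 \<open>\<not> q dvd b\<close>] by blast
          then obtain a' where a': "a = q^p * a'" by (auto elim: dvdE)
          have "q^p * (a' * b) = q^p * g'^p" using abg a' g' by (simp add: power_mult_distrib algebra_simps)
          then have "a' * b = g'^p" using qp0 q0 by simp
          moreover have "(s * q^p) * a' + t * b = 1" using st a' by (simp add: algebra_simps)
          ultimately obtain u d where "u dvd 1" "a' = u * d ^ p"
            using less.IH[OF lt] by blast
          then have "a = u * (q * d)^p" using a' by (simp add: power_mult_distrib algebra_simps)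
          then show ?thesis using \<open>u dvd 1\<close> by blast
        next
          assume qb: "q dvd b"
          then have "\<not> q dvd a" using not_both by blast
          then have "q ^ p dvd b" using primeish_pow[OF pq q0] qgp by blast
          then obtain b' where b': "b = q^p * b'" by (auto elim: dvdE)
          have "q^p * (a * b') = q^p * g'^p" using abg b' g' by (simp add: power_mult_distrib algebra_simps)
          then have "a * b' = g'^p" using qp0 q0 by simp
          moreover have "s * a + (t * q^p) * b' = 1" using st b' by (simp add: algebra_simps)
          ultimately show ?thesis using less.IH[OF lt] by blast
        qed
      qed
    qed
  qed
qed




definition eps :: zs where "eps = ZS 1 1"
definition eps' :: zs where "eps' = ZS (-1) 1"

lemma eps_inv: "eps * eps' = 1" by (simp add: eps_def eps'_def zs_1)

lemma pos_unit:
  "\<forall>a b. nat b = n \<longrightarrow> b \<ge> 0 \<longrightarrow> a > 0 \<longrightarrow> \<bar>a^2 - 2*b^2\<bar> = 1 \<longrightarrow> (\<exists>k. ZS a b = eps ^ k)"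
proof (induction n rule: less_induct)
  case (less n)
  show ?case
  proof (intro allI impI)
    fix a b :: int
    assume h: "nat b = n" "b \<ge> 0" "a > 0" "\<bar>a^2 - 2*b^2\<bar> = 1"
    show "\<exists>k. ZS a b = eps ^ k"
    proof (cases "b = 0")
      case True
      then have "a^2 = 1" using h by simp
      then have "a = 1 \<or> a = -1" using power2_eq_1_iff by blast
      then have "a = 1" using h(3) by auto
      then show ?thesis using True by (intro exI[of _ 0]) (simp add: zs_1)
    next
      case False
      then have b1: "b \<ge> 1" using h(2) by simp
      have up: "a^2 \<le> 2*b^2 + 1" and lo: "2*b^2 - 1 \<le> a^2" using h(4) by linarith+
      have "b^2 \<ge> 1" using b1 by (simp add: one_le_power)
      have a2b: "a < 2*b"
      proof (rule ccontr)
        assume "\<not> a < 2*b"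
        then have "(2*b)^2 \<le> a^2" using b1 by (intro power_mono) auto
        then show False using up \<open>b^2 \<ge> 1\<close> by (simp add: power_mult_distrib)
      qed
      have ab: "b \<le> a"
      proof (rule ccontr)
        assume "\<not> b \<le> a"
        then have "a^2 < b^2" using h(3) by (intro power_strict_mono) auto
        then show False using lo \<open>b^2 \<ge> 1\<close> by simp
      qed
      have "nat (a - b) < n" using a2b b1 h(1)[symmetric] by simp
      moreover have "\<bar>(2*b - a)^2 - 2*(a-b)^2\<bar> = 1"
      proof -
        have "(2*b - a)^2 - 2*(a-b)^2 = -(a^2 - 2*b^2)" by (simp add: power2_eq_square algebra_simps)
        then show ?thesis using h(4) by simp
      qed
      ultimately obtain k where k: "ZS (2*b - a) (a - b) = eps ^ k"
        using less.IH[of "nat (a-b)", rule_format, of "a - b" "2*b - a"] ab a2b by auto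
      have "ZS a b = ZS (2*b - a) (a - b) * eps" by (simp add: eps_def)
      then show ?thesis using k by (intro exI[of _ "Suc k"]) simp
    qed
  qed
qed

lemma pos_unit': "b \<ge> 0 \<Longrightarrow> a > 0 \<Longrightarrow> \<bar>a^2 - 2*b^2\<bar> = 1 \<Longrightarrow> \<exists>k. ZS a b = eps ^ k"
  using pos_unit by blast

lemma cnj_eps: "cnj eps = - eps'" by (simp add: cnj_def eps_def eps'_def)

lemma sign_pow: "(s::'a::comm_ring_1) = 1 \<or> s = -1 \<Longrightarrow> (s^k = 1 \<or> s^k = -1)"
  by (induction k) auto

lemma units:
  assumes "z dvd 1"
  shows "\<exists>k s. (s = 1 \<or> s = -1) \<and> (z = s * eps^k \<or> z = s * eps'^k)"
proof -
  obtain a b where z: "z = ZS a b" by (cases z)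
  have n: "\<bar>a^2 - 2*b^2\<bar> = 1" using assms unit_iff z by (simp add: N_def)
  have "a \<noteq> 0"
  proof
    assume "a = 0"
    then have "\<bar>2*b^2\<bar> = 1" using n by simp
    then show False by presburger
  qed
  show ?thesis
  proof (cases "a > 0")
    case True
    show ?thesis
    proof (cases "b \<ge> 0")
      case True
      then obtain k where "ZS a b = eps^k" using pos_unit' \<open>a > 0\<close> n by blast
      then show ?thesis using z by (intro exI[of _ k] exI[of _ 1]) simp
    next
      case False
      then obtain k where k: "ZS a (-b) = eps^k" using pos_unit'[of "-b" a] \<open>a > 0\<close> n by auto
      have "z = cnj (ZS a (-b))" using z by (simp add: cnj_def)
      also have "\<dots> = (- eps')^k" using k by (simp add: cnj_pow cnj_eps)
      also have "\<dots> = (-1)^k * eps'^k" by (rule power_minus)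
      finally show ?thesis using sign_pow[of "-1::zs" k] by blast
    qed
  next
    case False
    then have "-a > 0" using \<open>a \<noteq> 0\<close> by simp
    show ?thesis
    proof (cases "b \<le> 0")
      case True
      then obtain k where "ZS (-a) (-b) = eps^k" using pos_unit'[of "-b" "-a"] \<open>-a > 0\<close> n by auto
      moreover have "z = - ZS (-a) (-b)" using z by simp
      ultimately have "z = (-1) * eps^k" by simp
      then show ?thesis by blast
    next
      case False
      then obtain k where k: "ZS (-a) b = eps^k" using pos_unit'[of "b" "-a"] \<open>-a > 0\<close> n by auto
      have "z = - cnj (ZS (-a) b)" using z by (simp add: cnj_def)
      also have "\<dots> = -((- eps')^k)" using k by (simp add: cnj_pow cnj_eps)
      also have "\<dots> = (- ((-1)^k)) * eps'^k" by (subst power_minus) simp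
      finally have zz: "z = (- ((-1)^k)) * eps'^k" .
      have "- ((-1)^k) = (1::zs) \<or> - ((-1)^k) = (-1::zs)" using sign_pow[of "-1::zs" k] by auto
      then show ?thesis using zz by blast
    qed
  qed
qed

lemma reduce:
  fixes e e' :: "'a::comm_ring_1"
  assumes ee: "e * e' = 1" and p: "odd p"
  shows "\<exists>j c. 2*j \<le> p - 1 \<and> (e^k = e^j * c^p \<or> e^k = e'^j * c^p)"
proof -
  define m where "m = k div p"
  define j0 where "j0 = k mod p"
  have k: "k = p*m + j0" using m_def j0_def by simp
  have "p > 0" using p by (cases p) auto
  then have j0p: "j0 < p" using j0_def by simp
  show ?thesis
  proof (cases "2*j0 \<le> p - 1")
    case True
    have "e^k = e^j0 * (e^m)^p" using k by (simp add: power_add power_mult[symmetric] mult.commute)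
    then show ?thesis using True by blast
  next
    case False
    define j where "j = p - j0"
    have "2*j \<le> p - 1" using False j0p p j_def by presburger
    have "e^k = (e'^j * e^j) * e^k" using ee by (simp add: power_mult_distrib[symmetric] mult.commute)
    also have "\<dots> = e'^j * e^(j+k)" by (simp add: power_add mult.assoc)
    also have "j + k = (m+1)*p" using k j_def j0p by simp
    also have "e'^j * e^((m+1)*p) = e'^j * (e^(m+1))^p" by (simp only: power_mult)
    finally show ?thesis using \<open>2*j \<le> p - 1\<close> by blast
  qed
qed

lemma unit_form:
  assumes "u dvd 1" "odd p"
  shows "\<exists>j c. 2*j \<le> p - 1 \<and> (u = eps^j * c^p \<or> u = eps'^j * c^p)"
proof -
  obtain k s where s: "s = 1 \<or> s = -1" and u: "u = s * eps^k \<or> u = s * eps'^k"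
    using units assms(1) by blast
  have sp: "s^p = s" using s assms(2) by auto
  have key: "s * (E * c^p) = E * (s*c)^p" for E c :: zs
    by (simp add: power_mult_distrib sp algebra_simps)
  have e2: "eps' * eps = 1" using eps_inv by (simp add: mult.commute)
  from u show ?thesis
  proof
    assume u: "u = s * eps^k"
    obtain j c where j: "2*j \<le> p - 1" and "eps^k = eps^j * c^p \<or> eps^k = eps'^j * c^p"
      using reduce[OF eps_inv assms(2)] by blast
    then have "u = eps^j * (s*c)^p \<or> u = eps'^j * (s*c)^p" using u key by metis
    then show ?thesis using j by blast
  next
    assume u: "u = s * eps'^k"
    obtain j c where j: "2*j \<le> p - 1" and "eps'^k = eps'^j * c^p \<or> eps'^k = eps^j * c^p"
      using reduce[OF e2 assms(2)] by blast
    then have "u = eps^j * (s*c)^p \<or> u = eps'^j * (s*c)^p" using u key by metis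
    then show ?thesis using j by blast
  qed
qed




definition phi :: "zs \<Rightarrow> real" where "phi z = of_int (re z) + of_int (im z) * sqrt 2"
definition psi :: "zs \<Rightarrow> real" where "psi z = of_int (re z) - of_int (im z) * sqrt 2"

lemma s2: "sqrt 2 * sqrt 2 = (2::real)" by simp

lemma phi_mult: "phi (a * b) = phi a * phi b"
proof -
  obtain a1 a2 b1 b2 where "a = ZS a1 a2" "b = ZS b1 b2" by (cases a; cases b)
  then show ?thesis
    by (simp add: phi_def algebra_simps)
qed

lemma psi_mult: "psi (a * b) = psi a * psi b"
proof -
  obtain a1 a2 b1 b2 where "a = ZS a1 a2" "b = ZS b1 b2" by (cases a; cases b)
  then show ?thesis
    by (simp add: psi_def algebra_simps)
qed

lemma phi_pow: "phi (a ^ n) = phi a ^ n"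
  by (induction n) (simp_all add: phi_mult, simp add: phi_def zs_1)
lemma psi_pow: "psi (a ^ n) = psi a ^ n"
  by (induction n) (simp_all add: psi_mult, simp add: psi_def zs_1)

lemma inv1: "inverse (1 + sqrt 2) = sqrt 2 - (1::real)"
  by (rule inverse_unique) (simp add: algebra_simps)
lemma inv2: "inverse (1 - sqrt 2) = - 1 - sqrt (2::real)"
  by (rule inverse_unique) (simp add: algebra_simps)

lemma phi_eps: "phi eps = 1 + sqrt 2" "psi eps = 1 - sqrt 2"
  "phi eps' = sqrt 2 - 1" "psi eps' = - 1 - sqrt 2"
  by (simp_all add: phi_def psi_def eps_def eps'_def)

lemma E_phi_psi:
  assumes "E = eps^j \<or> E = eps'^j"
  shows "\<exists>r::int. \<bar>r\<bar> = int j \<and> phi E = (1 + sqrt 2) powi r \<and> psi E = (1 - sqrt 2) powi r"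
  using assms
proof
  assume E: "E = eps^j"
  show ?thesis
    by (rule exI[of _ "int j"]) (simp add: E phi_pow psi_pow phi_eps)
next
  assume E: "E = eps'^j"
  have "(1 + sqrt 2) powi (- int j) = (sqrt 2 - 1) ^ j"
    by (simp add: power_int_minus inv1 flip: power_inverse)
  moreover have "(1 - sqrt 2) powi (- int j) = (- 1 - sqrt 2) ^ j"
    by (simp add: power_int_minus inv2 flip: power_inverse)
  ultimately show ?thesis
    by (intro exI[of _ "- int j"]) (simp add: E phi_pow psi_pow phi_eps)
qed

lemma zs_pow_int: "ZS y 0 ^ n = ZS (y^n) 0"
  by (induction n) (simp_all add: zs_1)




lemma odd_dvd8: "odd (k::int) \<Longrightarrow> k dvd 8 \<Longrightarrow> \<bar>k\<bar> = 1"
proof -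
  assume o: "odd k" and d: "k dvd 8"
  have kd: "\<bar>k\<bar> dvd 8" using d by simp
  have "\<bar>k\<bar> \<le> 8" using dvd_imp_le_int[of 8 k] d by simp
  moreover have "\<bar>k\<bar> > 0" using o by (auto intro: ccontr)
  moreover have "odd \<bar>k\<bar>" using o by simp
  ultimately have "\<bar>k\<bar> = 1 \<or> \<bar>k\<bar> = 3 \<or> \<bar>k\<bar> = 5 \<or> \<bar>k\<bar> = 7"
    by presburger
  moreover have h: "\<bar>k\<bar> \<noteq> m" if "\<not> (m::int) dvd 8" for m using kd that by metis
  have "\<bar>k\<bar> \<noteq> 3" "\<bar>k\<bar> \<noteq> 5" "\<bar>k\<bar> \<noteq> 7" by (rule h; simp)+
  ultimately show ?thesis by blast
qed

lemma x_odd: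
  fixes x y :: int and P :: nat
  assumes "P \<ge> 3" "x^2 - 2 = y^P"
  shows "odd x"
proof
  assume "even x"
  then obtain m where m: "x = 2*m" by auto
  have "even (x^2 - 2)" using m by simp
  then have "even (y^P)" using assms(2) by simp
  then have "even y" by simp
  then obtain w where w: "y = 2*w" by auto
  have "y^P = 2^P * w^P" using w by (simp add: power_mult_distrib)
  moreover have "(4::int) dvd 2^P" using assms(1)
  proof -
    have "(2::int)^2 dvd 2^P" using assms(1) by (intro le_imp_power_dvd) simp
    then show ?thesis by simp
  qed
  ultimately have "4 dvd y^P" by simp
  then have "4 dvd x^2 - 2" using assms(2) by simp
  moreover have "x^2 = 4 * m^2" using m by (simp add: power_mult_distrib)
  ultimately have "(4::int) dvd 4 * m^2 - 2" by simp
  then have "(4::int) dvd 4 * m^2 - (4 * m^2 - 2)" using dvd_diff dvd_triv_left by blast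
  then have "(4::int) dvd 2" by simp
  then show False by simp
qed

theorem theorem3p1:
  fixes x y p :: int
  assumes "prime p" and "p \<ge> 3" and "x ^ 2 - 2 = y ^ nat p"
  shows "\<exists>a b r :: int.
           real_of_int \<bar>r\<bar> \<le> (real_of_int p - 1) / 2 \<and>
           real_of_int x + sqrt 2 = (1 + sqrt 2) powi r * (real_of_int a + real_of_int b * sqrt 2) ^ nat p \<and>
           1 / (2 * sqrt 2) * ((1 + sqrt 2) powi r * (real_of_int a + real_of_int b * sqrt 2) ^ nat p
              - (1 - sqrt 2) powi r * (real_of_int a - real_of_int b * sqrt 2) ^ nat p) = 1"
proof -
  define P where "P = nat p"
  have P3: "P \<ge> 3" using assms(2) P_def by simp
  have oddp: "odd p" using assms(1,2) prime_odd_int by auto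
  have oddP: "odd P" using oddp assms(2) P_def by (simp add: even_nat_iff)
  have eq: "x^2 - 2 = y^P" using assms(3) P_def by simp
  have xo: "odd x" using x_odd[OF P3 eq] .
  define \<alpha> where "\<alpha> = ZS x 1"
  define \<beta> where "\<beta> = ZS x (-1)"
  define g where "g = ZS y 0"
  have abg: "\<alpha> * \<beta> = g ^ P"
    using eq by (simp add: \<alpha>_def \<beta>_def g_def zs_pow_int power2_eq_square)
  have "\<alpha> \<noteq> 0" by (simp add: \<alpha>_def zs_0)
  then obtain s t where d0: "s*\<alpha> + t*\<beta> \<noteq> 0" and da: "(s*\<alpha>+t*\<beta>) dvd \<alpha>" and db: "(s*\<alpha>+t*\<beta>) dvd \<beta>"
    using bezout by blast
  define d where "d = s*\<alpha>+t*\<beta>"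
  have "d dvd \<alpha> - \<beta>" using da db d_def by simp
  moreover have "\<alpha> - \<beta> = ZS 0 2" by (simp add: \<alpha>_def \<beta>_def)
  ultimately have "N d dvd N (ZS 0 2)" using N_dvd by metis
  then have d8: "N d dvd 8" by (simp add: N_def)
  have "N d dvd N \<alpha>" using da d_def N_dvd by blast
  moreover have "N \<alpha> = x^2 - 2" by (simp add: N_def \<alpha>_def)
  moreover have "odd (x^2 - 2)" using xo by simp
  ultimately have "odd (N d)" by (metis dvd_trans)
  then have "\<bar>N d\<bar> = 1" using odd_dvd8 d8 by blast
  then have "d dvd 1" using unit_iff by simp
  then obtain e where "1 = d * e" by (auto elim: dvdE)
  then have "(e*s)*\<alpha> + (e*t)*\<beta> = 1" unfolding d_def by (simp add: algebra_simps)
  then have "\<exists>s t. s*\<alpha> + t*\<beta> = 1" by blast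
  moreover have "P > 0" using P3 by simp
  ultimately obtain u \<delta> where u: "u dvd 1" and au: "\<alpha> = u * \<delta>^P"
    using power_lemma[of P "nat \<bar>N g\<bar>"] abg by blast
  obtain j c where j: "2*j \<le> P - 1" and uE: "u = eps^j * c^P \<or> u = eps'^j * c^P"
    using unit_form[OF u oddP] by blast
  then obtain E where E: "E = eps^j \<or> E = eps'^j" and uE': "u = E * c^P" by blast
  have \<alpha>E: "\<alpha> = E * (c*\<delta>)^P" using au uE' by (simp add: power_mult_distrib mult.assoc)
  obtain r where r: "\<bar>r\<bar> = int j" and phiE: "phi E = (1 + sqrt 2) powi r"
      and psiE: "psi E = (1 - sqrt 2) powi r"
    using E_phi_psi[OF E] by blast
  define A where "A = re (c*\<delta>)"
  define B where "B = im (c*\<delta>)"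
  have "phi \<alpha> = real_of_int x + sqrt 2" by (simp add: phi_def \<alpha>_def)
  moreover have "phi \<alpha> = (1 + sqrt 2) powi r * (real_of_int A + real_of_int B * sqrt 2) ^ P"
  proof -
    have "phi \<alpha> = phi E * phi (c*\<delta>) ^ P" by (simp add: \<alpha>E phi_mult phi_pow)
    moreover have "phi (c*\<delta>) = real_of_int A + real_of_int B * sqrt 2" by (simp add: phi_def A_def B_def)
    ultimately show ?thesis using phiE by simp
  qed
  ultimately have c2: "real_of_int x + sqrt 2 = (1 + sqrt 2) powi r * (real_of_int A + real_of_int B * sqrt 2) ^ P"
    by simp
  have "psi \<alpha> = real_of_int x - sqrt 2" by (simp add: psi_def \<alpha>_def)
  moreover have "psi \<alpha> = (1 - sqrt 2) powi r * (real_of_int A - real_of_int B * sqrt 2) ^ P"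
  proof -
    have "psi \<alpha> = psi E * psi (c*\<delta>) ^ P" by (simp add: \<alpha>E psi_mult psi_pow)
    moreover have "psi (c*\<delta>) = real_of_int A - real_of_int B * sqrt 2" by (simp add: psi_def A_def B_def)
    ultimately show ?thesis using psiE by simp
  qed
  ultimately have c3: "real_of_int x - sqrt 2 = (1 - sqrt 2) powi r * (real_of_int A - real_of_int B * sqrt 2) ^ P"
    by simp
  have c1: "real_of_int \<bar>r\<bar> \<le> (real_of_int p - 1) / 2"
  proof -
    have "2 * int j \<le> p - 1" using j P_def assms(2) by linarith
    then show ?thesis using r by simp
  qed
  have "1 / (2 * sqrt 2) * ((real_of_int x + sqrt 2) - (real_of_int x - sqrt 2)) = 1" by simp
  then show ?thesis using c1 c2 c3 P_def by metis
qed


end
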